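(* Let $\mathcal{I}$ be an interval hypergraph on $[n]$ and $A,B$ acyclic orientations of $\mathcal{I}$. Then $A\le B$ in $P_{\mathcal{I}}$ if and only if $A(I)\le B(I)$ for all $I\in\mathcal{I}$.
   Context: An interval hypergraph $\mathcal{I}$ on $[n]$ is a collection of intervals of $[n]$ containing all singletons. An orientation is a map $O:\mathcal{I}\to[n]$ with $O(I)\in I$; it is acyclic if there are no $H_1,\dots,H_k\in\mathcal{I}$, $k\ge2$, with $O(H_{i+1})\in H_i\setminus\{O(H_i)\}$ for $i\in[k-1]$ and $O(H_1)\in H_k\setminus\{O(H_k)\}$. Orientations $O\ne O'$ are related by an increasing flip (from $O$ to $O'$) if there exist $1\le i<j\le n$ such that for all $H$: if $O(H)\ne O'(H)$ then $O(H)=i$, $O'(H)=j$; and if $\{i,j\}\subseteq H$ then $O(H)=i\iff O'(H)=j$. $P_{\mathcal{I}}$ is the transitive closure of the increasing flip relation on the acyclic orientations of $\mathcal{I}$. *)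

theory Defs
  imports Main "HOL-Library.FuncSet"
begin

definition is_interval :: "nat \<Rightarrow> nat set \<Rightarrow> bool" where
  "is_interval n H \<longleftrightarrow> (\<exists>a b. 1 \<le> a \<and> a \<le> b \<and> b \<le> n \<and> H = {a..b})"

definition interval_hypergraph :: "nat \<Rightarrow> nat set set \<Rightarrow> bool" where
  "interval_hypergraph n \<I> \<longleftrightarrow> (\<forall>H\<in>\<I>. is_interval n H) \<and> (\<forall>i\<in>{1..n}. {i} \<in> \<I>)"

definition orientation :: "nat set set \<Rightarrow> (nat set \<Rightarrow> nat) \<Rightarrow> bool" where
  "orientation \<I> R \<longleftrightarrow> R \<in> extensional \<I> \<and> (\<forall>H\<in>\<I>. R H \<in> H)"

definition acyclic_orientation :: "nat set set \<Rightarrow> (nat set \<Rightarrow> nat) \<Rightarrow> bool" where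
  "acyclic_orientation \<I> R \<longleftrightarrow> orientation \<I> R \<and>
     \<not> (\<exists>Hs. length Hs \<ge> 2 \<and> set Hs \<subseteq> \<I> \<and>
          (\<forall>i. Suc i < length Hs \<longrightarrow> R (Hs ! Suc i) \<in> Hs ! i - {R (Hs ! i)}) \<and>
          R (Hs ! 0) \<in> last Hs - {R (last Hs)})"

definition increasing_flip :: "nat set set \<Rightarrow> (nat set \<Rightarrow> nat) \<Rightarrow> (nat set \<Rightarrow> nat) \<Rightarrow> bool" where
  "increasing_flip \<I> R Q \<longleftrightarrow> R \<noteq> Q \<and>
     (\<exists>i j. 1 \<le> i \<and> i < j \<and>
        (\<forall>H\<in>\<I>. (R H \<noteq> Q H \<longrightarrow> R H = i \<and> Q H = j) \<and>
                 ({i, j} \<subseteq> H \<longrightarrow> (R H = i \<longleftrightarrow> Q H = j))))"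

definition flip_rel :: "nat set set \<Rightarrow> ((nat set \<Rightarrow> nat) \<times> (nat set \<Rightarrow> nat)) set" where
  "flip_rel \<I> = {(R, Q). acyclic_orientation \<I> R \<and> acyclic_orientation \<I> Q \<and> increasing_flip \<I> R Q}"

definition P_le :: "nat set set \<Rightarrow> (nat set \<Rightarrow> nat) \<Rightarrow> (nat set \<Rightarrow> nat) \<Rightarrow> bool" where
  "P_le \<I> A B \<longleftrightarrow> (A, B) \<in> (flip_rel \<I>)\<^sup>*"

end

theory Submission
  imports Defs
begin


definition oedge :: "nat set set \<Rightarrow> (nat set \<Rightarrow> nat) \<Rightarrow> (nat \<times> nat) set" where
  "oedge I R = {(u,v). \<exists>G\<in>I. R G = u \<and> v \<in> G \<and> v \<noteq> u}"

lemma interval_mem: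
  assumes "interval_hypergraph n I" "G \<in> I" "a \<in> G" "b \<in> G" "a \<le> m" "m \<le> b"
  shows "m \<in> G"
proof -
  from assms(1,2) have "is_interval n G" by (auto simp: interval_hypergraph_def)
  then obtain x y where "G = {x..y}" by (auto simp: is_interval_def)
  with assms show ?thesis by auto
qed

lemma interval_sub:
  assumes "interval_hypergraph n I" "G \<in> I"
  shows "G \<subseteq> {1..n}"
proof -
  from assms(1,2) have "is_interval n G" by (auto simp: interval_hypergraph_def)
  then show ?thesis by (auto simp: is_interval_def)
qed

lemma finite_I:
  assumes "interval_hypergraph n I" shows "finite I"
proof -
  have "I \<subseteq> Pow {1..n}" using interval_sub[OF assms] by blast
  then show ?thesis by (rule finite_subset) simp
qed

lemma path_list:
  assumes "(x,y) \<in> (oedge I R)\<^sup>+"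
  shows "\<exists>Hs. Hs \<noteq> [] \<and> set Hs \<subseteq> I \<and> R (Hs!0) = x \<and>
     (\<forall>k. Suc k < length Hs \<longrightarrow> R (Hs ! Suc k) \<in> Hs ! k - {R (Hs ! k)}) \<and>
     y \<in> last Hs - {R (last Hs)}"
  using assms
proof (induction rule: trancl_induct)
  case (base y)
  then obtain G where "G \<in> I" "R G = x" "y \<in> G" "y \<noteq> x" by (auto simp: oedge_def)
  then show ?case by (intro exI[of _ "[G]"]) auto
next
  case (step y z)
  then obtain Hs where H: "Hs \<noteq> []" "set Hs \<subseteq> I" "R (Hs!0) = x"
     "\<forall>k. Suc k < length Hs \<longrightarrow> R (Hs ! Suc k) \<in> Hs ! k - {R (Hs ! k)}"
     "y \<in> last Hs - {R (last Hs)}" by blast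
  from step.hyps(2) obtain G where G: "G \<in> I" "R G = y" "z \<in> G" "z \<noteq> y" by (auto simp: oedge_def)
  show ?case
  proof (intro exI[of _ "Hs @ [G]"] conjI allI impI)
    show "R ((Hs @ [G]) ! 0) = x" using H by (simp add: nth_append)
    fix k assume k: "Suc k < length (Hs @ [G])"
    show "R ((Hs @ [G]) ! Suc k) \<in> (Hs @ [G]) ! k - {R ((Hs @ [G]) ! k)}"
    proof (cases "Suc k < length Hs")
      case True then show ?thesis using H(4) by (simp add: nth_append)
    next
      case False
      then have "Suc k = length Hs" using k by simp
      then have "(Hs @ [G]) ! Suc k = G" by (simp add: nth_append)
      moreover have "(Hs @ [G]) ! k = last Hs"
        using H(1) \<open>Suc k = length Hs\<close> by (simp add: nth_append last_conv_nth flip: \<open>Suc k = length Hs\<close>)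
      ultimately show ?thesis using G H(5) by simp
    qed
  qed (use H G in auto)
qed

lemma acyc_trancl:
  assumes "acyclic_orientation I R"
  shows "(x,x) \<notin> (oedge I R)\<^sup>+"
proof
  assume "(x,x) \<in> (oedge I R)\<^sup>+"
  from path_list[OF this] obtain Hs where H: "Hs \<noteq> []" "set Hs \<subseteq> I" "R (Hs!0) = x"
     "\<forall>k. Suc k < length Hs \<longrightarrow> R (Hs ! Suc k) \<in> Hs ! k - {R (Hs ! k)}"
     "x \<in> last Hs - {R (last Hs)}" by blast
  have "length Hs \<ge> 2"
  proof (rule ccontr)
    assume "\<not> length Hs \<ge> 2"
    with H(1) have "length Hs = 1" by (cases Hs) (auto simp: Suc_le_eq)
    then have "last Hs = Hs ! 0" using H(1) by (simp add: last_conv_nth)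
    with H(3,5) show False by simp
  qed
  with H assms show False unfolding acyclic_orientation_def by blast
qed

lemma rank_acyc:
  assumes "orientation I R" "\<And>u v. (u,v) \<in> oedge I R \<Longrightarrow> (\<rho>::nat\<Rightarrow>nat) u < \<rho> v"
  shows "acyclic_orientation I R"
  unfolding acyclic_orientation_def
proof (intro conjI notI assms(1))
  assume "\<exists>Hs. 2 \<le> length Hs \<and> set Hs \<subseteq> I \<and>
      (\<forall>i. Suc i < length Hs \<longrightarrow> R (Hs ! Suc i) \<in> Hs ! i - {R (Hs ! i)}) \<and>
      R (Hs ! 0) \<in> last Hs - {R (last Hs)}"
  then obtain Hs where H: "2 \<le> length Hs" "set Hs \<subseteq> I"
      "\<forall>i. Suc i < length Hs \<longrightarrow> R (Hs ! Suc i) \<in> Hs ! i - {R (Hs ! i)}"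
      "R (Hs ! 0) \<in> last Hs - {R (last Hs)}" by blast
  have e: "\<rho> (R (Hs ! k)) < \<rho> (R (Hs ! Suc k))" if "Suc k < length Hs" for k
  proof -
    have "Hs ! k \<in> I" using H(2) that by auto
    then have "(R (Hs ! k), R (Hs ! Suc k)) \<in> oedge I R"
      using H(3) that unfolding oedge_def by blast
    then show ?thesis by (rule assms(2))
  qed
  have le: "\<rho> (R (Hs ! 0)) \<le> \<rho> (R (Hs ! k))" if "k < length Hs" for k
    using that
  proof (induction k)
    case 0 then show ?case by simp
  next
    case (Suc k) then show ?case using e[of k] by simp
  qed
  have L: "last Hs = Hs ! (length Hs - 1)" using H(1) by (intro last_conv_nth) auto
  have "last Hs \<in> I" using H(1,2) by (simp add: L subset_iff)
  then have "(R (last Hs), R (Hs ! 0)) \<in> oedge I R" using H(4) unfolding oedge_def by blast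
  then have "\<rho> (R (last Hs)) < \<rho> (R (Hs ! 0))" by (rule assms(2))
  moreover have "\<rho> (R (Hs ! 0)) \<le> \<rho> (R (last Hs))" using le[of "length Hs - 1"] H(1) L by simp
  ultimately show False by simp
qed

lemma crossing:
  assumes ih: "interval_hypergraph n I" and o: "orientation I R"
    and p: "(x,y) \<in> (oedge I R)\<^sup>*"
  shows "min x y \<le> m \<Longrightarrow> m \<le> max x y \<Longrightarrow>
     \<exists>s. (x,s) \<in> (oedge I R)\<^sup>* \<and> (s,y) \<in> (oedge I R)\<^sup>* \<and> (s = m \<or> (s,m) \<in> oedge I R)"
  using p
proof (induction arbitrary: m rule: rtrancl_induct)
  case base then show ?case by auto
next
  case (step z y)
  show ?case
  proof (cases "min x z \<le> m \<and> m \<le> max x z")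
    case True
    from step.IH[OF True[THEN conjunct1] True[THEN conjunct2]] obtain s where
      "(x,s) \<in> (oedge I R)\<^sup>*" "(s,z) \<in> (oedge I R)\<^sup>*" "s = m \<or> (s,m) \<in> oedge I R" by blast
    moreover have "(s,y) \<in> (oedge I R)\<^sup>*" using \<open>(s,z) \<in> _\<close> step.hyps(2) by simp
    ultimately show ?thesis by blast
  next
    case False
    from step.hyps(2) obtain G where G: "G \<in> I" "R G = z" "y \<in> G" "y \<noteq> z"
      by (auto simp: oedge_def)
    have zG: "z \<in> G" using o G unfolding orientation_def by auto
    have "min z y \<le> m \<and> m \<le> max z y" using False step.prems by auto
    then have "m \<in> G"
      by (metis G(3) ih interval_mem G(1) zG max_def min_def)
    then have "z = m \<or> (z,m) \<in> oedge I R" using G unfolding oedge_def by blast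
    moreover have "(z,y) \<in> (oedge I R)\<^sup>*" using step.hyps(2) by simp
    ultimately show ?thesis using step.hyps(1) by blast
  qed
qed



lemma step_exists:
  assumes ih: "interval_hypergraph n I"
    and aA: "acyclic_orientation I A" and aB: "acyclic_orientation I B"
    and le: "\<forall>G\<in>I. A G \<le> B G" and ne: "\<exists>G\<in>I. A G < B G"
  shows "\<exists>A'. (A,A') \<in> flip_rel I \<and> (\<forall>G\<in>I. A' G \<le> B G) \<and>
      (\<forall>G\<in>I. A G \<le> A' G) \<and> (\<exists>G\<in>I. A G < A' G)"
proof -
  define EA where "EA = oedge I A"
  define EB where "EB = oedge I B"
  have oA: "orientation I A" and oB: "orientation I B"
    using aA aB by (auto simp: acyclic_orientation_def)
  have AG: "A G \<in> G" if "G \<in> I" for G using oA that by (auto simp: orientation_def)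
  have BG: "B G \<in> G" if "G \<in> I" for G using oB that by (auto simp: orientation_def)
  have acA: "(x,x) \<notin> EA\<^sup>+" for x unfolding EA_def by (rule acyc_trancl[OF aA])
  have acB: "(x,x) \<notin> EB\<^sup>+" for x unfolding EB_def by (rule acyc_trancl[OF aB])
  have fI: "finite I" by (rule finite_I[OF ih])
  define D where "D = {G\<in>I. A G < B G}"
  have fD: "finite D" "D \<noteq> {}" using fI ne by (auto simp: D_def)
  define i where "i = Max (A ` D)"
  have "i \<in> A ` D" unfolding i_def using fD by (intro Max_in) auto
  then obtain G0 where G0: "G0 \<in> D" "A G0 = i" by auto
  have imax: "A G \<le> i" if "G \<in> I" "A G < B G" for G
    unfolding i_def by (rule Max_ge) (use fD that in \<open>auto simp: D_def\<close>)
  have G0I: "G0 \<in> I" using G0 by (auto simp: D_def)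
  define c where "c = B G0"
  have ic: "i < c" using G0 by (auto simp: D_def c_def)
  have cG0: "c \<in> G0" "i \<in> G0" using BG AG G0I G0 by (auto simp: c_def)
  have icE: "(i,c) \<in> EA" using G0I G0 cG0 ic unfolding EA_def oedge_def by auto
  define h where "h x = card {y. (y,x) \<in> EA\<^sup>+}" for x
  have anc_sub: "{y. (y,x) \<in> EA\<^sup>+} \<subseteq> {1..n}" for x
  proof
    fix y assume "y \<in> {y. (y,x) \<in> EA\<^sup>+}"
    then obtain z where "(y,z) \<in> EA" by (auto dest: tranclD)
    then obtain G where "G \<in> I" "A G = y" unfolding EA_def oedge_def by auto
    then show "y \<in> {1..n}" using interval_sub[OF ih] AG by blast
  qed
  have hle: "h x \<le> n" for x
    unfolding h_def using card_mono[OF _ anc_sub[of x]] by simp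
  have hmono: "h u < h v" if "(u,v) \<in> EA\<^sup>+" for u v
  proof -
    have sub: "insert u {y. (y,u) \<in> EA\<^sup>+} \<subseteq> {y. (y,v) \<in> EA\<^sup>+}"
    proof
      fix y assume "y \<in> insert u {y. (y,u) \<in> EA\<^sup>+}"
      then have "y = u \<or> (y,u) \<in> EA\<^sup>+" by simp
      then show "y \<in> {y. (y,v) \<in> EA\<^sup>+}"
      proof
        assume "y = u" then show ?thesis using that by simp
      next
        assume "(y,u) \<in> EA\<^sup>+" then show ?thesis using that by simp
      qed
    qed
    have nu: "u \<notin> {y. (y,u) \<in> EA\<^sup>+}" using acA[of u] by simp
    have fv: "finite {y. (y,v) \<in> EA\<^sup>+}" using anc_sub[of v] by (rule finite_subset) simp
    have fu: "finite {y. (y,u) \<in> EA\<^sup>+}" using anc_sub[of u] by (rule finite_subset) simp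
    have "card (insert u {y. (y,u) \<in> EA\<^sup>+}) \<le> card {y. (y,v) \<in> EA\<^sup>+}"
      using fv sub by (rule card_mono)
    then show ?thesis using nu fu unfolding h_def by simp
  qed
  define S where "S = {v. i < v \<and> (i,v) \<in> EA\<^sup>+ \<and> (v,c) \<in> EA\<^sup>*}"
  have cS: "c \<in> S" using ic icE by (auto simp: S_def)
  obtain j where jS: "j \<in> S" and jmin: "\<And>k. k \<in> S \<Longrightarrow> h j \<le> h k"
    using ex_has_least_nat[of "\<lambda>v. v \<in> S" c h] cS by blast
  have ij: "i < j" "(i,j) \<in> EA\<^sup>+" "(j,c) \<in> EA\<^sup>*" using jS by (auto simp: S_def)
  have cover: False if "(i,k) \<in> EA\<^sup>+" "(k,j) \<in> EA\<^sup>+" for k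
  proof (cases "i < k")
    case True
    have "(k,c) \<in> EA\<^sup>*" using trancl_into_rtrancl[OF that(2)] ij(3) by (rule rtrancl_trans)
    then have "k \<in> S" using True that(1) by (simp add: S_def)
    then have "h j \<le> h k" by (rule jmin)
    moreover have "h k < h j" by (rule hmono[OF that(2)])
    ultimately show False by simp
  next
    case False
    show False
    proof (cases "k = i")
      case True then show False using that(1) acA by simp
    next
      case False
      with \<open>\<not> i < k\<close> have "k < i" by simp
      have "(k,j) \<in> (oedge I A)\<^sup>*" using that(2) unfolding EA_def by simp
      from crossing[OF ih oA this, of i] \<open>k < i\<close> ij(1) obtain s where
        s: "(k,s) \<in> EA\<^sup>*" "(s,j) \<in> EA\<^sup>*" "s = i \<or> (s,i) \<in> EA" unfolding EA_def by auto
      from s(3) show False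
      proof
        assume "s = i"
        then have "(i,i) \<in> EA\<^sup>+" using trancl_rtrancl_trancl[OF that(1) s(1)] by simp
        then show False using acA by simp
      next
        assume "(s,i) \<in> EA"
        with s(1) have "(k,i) \<in> EA\<^sup>+" by (rule rtrancl_into_trancl1)
        then have "(i,i) \<in> EA\<^sup>+" using that(1) by (rule trancl_trans[rotated])
        then show False using acA by simp
      qed
    qed
  qed
  have ijE: "(i,j) \<in> EA"
  proof (rule tranclE[OF ij(2)])
    fix y assume "(i,y) \<in> EA\<^sup>+" "(y,j) \<in> EA"
    then show ?thesis using cover by blast
  qed
  then obtain G1 where G1: "G1 \<in> I" "A G1 = i" "j \<in> G1" unfolding EA_def oedge_def by auto
  have noji: "A H \<noteq> j" if "H \<in> I" "i \<in> H" for H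
  proof
    assume "A H = j"
    then have "(j,i) \<in> EA" using that ij(1) unfolding EA_def oedge_def by auto
    then have "(j,j) \<in> EA\<^sup>+" using ijE by (meson r_into_trancl trancl_into_trancl)
    then show False using acA by simp
  qed
  have pathB: "(j,y) \<in> EB\<^sup>* \<and> i < y \<and> (i,y) \<in> EA\<^sup>+" if "(j,y) \<in> EA\<^sup>*" for y
    using that
  proof (induction rule: rtrancl_induct)
    case base show ?case using ij by simp
  next
    case (step z w)
    from step.IH have z: "(j,z) \<in> EB\<^sup>*" "i < z" "(i,z) \<in> EA\<^sup>+" by auto
    from step.hyps(2) obtain G where G: "G \<in> I" "A G = z" "w \<in> G" "w \<noteq> z"
      unfolding EA_def oedge_def by auto
    have "\<not> A G < B G"
    proof
      assume "A G < B G" then have "A G \<le> i" using imax G(1) by simp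
      with z(2) G(2) show False by simp
    qed
    then have "B G = z" using le G(1,2) by force
    then have zwB: "(z,w) \<in> EB" using G unfolding EB_def oedge_def by auto
    have iw: "(i,w) \<in> EA\<^sup>+" using z(3) step.hyps(2) by (rule trancl_into_trancl)
    have "i < w"
    proof (rule ccontr)
      assume "\<not> i < w"
      show False
      proof (cases "w = i")
        case True then show False using iw acA by simp
      next
        case False
        with \<open>\<not> i < w\<close> have "w < i" by simp
        have "z \<in> G" using AG G by auto
        have "i \<in> G" using interval_mem[OF ih G(1) G(3) \<open>z \<in> G\<close>, of i] \<open>w < i\<close> z(2) by simp
        then have "(z,i) \<in> EA" using G z(2) unfolding EA_def oedge_def by auto
        with z(3) have "(i,i) \<in> EA\<^sup>+" by (rule trancl_into_trancl)
        then show False using acA by simp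
      qed
    qed
    have "(j,w) \<in> EB\<^sup>*" using z(1) zwB by (rule rtrancl_into_rtrancl)
    then show ?case using iw \<open>i < w\<close> by simp
  qed
  have jcB: "(j,c) \<in> EB\<^sup>*" using pathB[OF ij(3)] by simp
  have bcond: "j \<le> B G" if G: "G \<in> I" "A G = i" "j \<in> G" for G
  proof (rule ccontr)
    assume "\<not> j \<le> B G"
    define d where "d = B G"
    have dj: "d < j" using \<open>\<not> j \<le> B G\<close> by (simp add: d_def)
    have id: "i \<le> d" using le G(1) G(2)[symmetric] by (simp add: d_def)
    have djE: "(d,j) \<in> EB" using G dj unfolding EB_def oedge_def d_def by auto
    show False
    proof (cases "d \<le> c")
      case True
      have dG0: "d \<in> G0" using interval_mem[OF ih G0I cG0(2) cG0(1)] id True by simp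
      show False
      proof (cases "d = c")
        case True
        have "(c,c) \<in> EB\<^sup>+" using rtrancl_into_trancl2[OF djE jcB] True by simp
        then show False using acB by simp
      next
        case False
        have cd: "(c,d) \<in> EB" using G0I dG0 False unfolding EB_def oedge_def c_def by auto
        have "(d,c) \<in> EB\<^sup>+" by (rule rtrancl_into_trancl2[OF djE jcB])
        then have "(c,c) \<in> EB\<^sup>+" by (rule trancl_into_trancl2[OF cd])
        then show False using acB by simp
      qed
    next
      case False
      have "(j,c) \<in> (oedge I B)\<^sup>*" using jcB by (simp add: EB_def)
      from crossing[OF ih oB this, of d] False dj obtain s where
        s: "(j,s) \<in> EB\<^sup>*" "(s,c) \<in> EB\<^sup>*" "s = d \<or> (s,d) \<in> EB" unfolding EB_def by auto
      from s(3) show False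
      proof
        assume "s = d"
        then have "(d,d) \<in> EB\<^sup>+" using rtrancl_into_trancl2[OF djE s(1)] by simp
        then show False using acB by simp
      next
        assume "(s,d) \<in> EB"
        with s(1) have "(j,d) \<in> EB\<^sup>+" by (rule rtrancl_into_trancl1)
        then have "(d,d) \<in> EB\<^sup>+" by (rule trancl_into_trancl2[OF djE])
        then show False using acB by simp
      qed
    qed
  qed
  define A' where "A' = (\<lambda>G. if G \<in> I \<and> A G = i \<and> j \<in> G then j else A G)"
  have oA': "orientation I A'"
    using oA unfolding orientation_def A'_def extensional_def by auto
  have jL: "\<not> ((j,j) \<in> EA\<^sup>+)" using acA by simp
  define Low where "Low = {x. (x,j) \<in> EA\<^sup>+ \<and> x \<noteq> i}"
  have hL: "h x \<le> n" for x by (rule hle)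
  define \<rho> where "\<rho> x = (if x \<in> Low then h x else if x = j then n+1 else if x = i then n+2 else n+3+h x)" for x
  have \<rho>j: "\<rho> j = n+1" using jL ij(1) by (simp add: \<rho>_def Low_def)
  have \<rho>i: "\<rho> i = n+2" using ij(1) by (simp add: \<rho>_def Low_def)
  have rk: "\<rho> u < \<rho> v" if uv: "(u,v) \<in> oedge I A'" for u v
  proof -
    from uv obtain G where G: "G \<in> I" "A' G = u" "v \<in> G" "v \<noteq> u" unfolding oedge_def by auto
    show ?thesis
    proof (cases "A G = i \<and> j \<in> G")
      case True
      then have u: "u = j" using G by (simp add: A'_def)
      show ?thesis
      proof (cases "v = i")
        case True then show ?thesis using u \<rho>i \<rho>j by simp
      next
        case False
        have ivE: "(i,v) \<in> EA" using G True False unfolding EA_def oedge_def by auto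
        have "v \<notin> Low"
        proof
          assume "v \<in> Low" then have "(v,j) \<in> EA\<^sup>+" by (simp add: Low_def)
          then show False using cover[OF r_into_trancl[OF ivE]] by simp
        qed
        then have "\<rho> v = n+3+h v" using False G(4) u by (simp add: \<rho>_def)
        then show ?thesis using u \<rho>j by simp
      qed
    next
      case False
      then have u: "A G = u" using G by (auto simp: A'_def split: if_splits)
      have uvE: "(u,v) \<in> EA" using G u unfolding EA_def oedge_def by auto
      show ?thesis
      proof (cases "v \<in> Low")
        case True
        then have vj: "(v,j) \<in> EA\<^sup>+" by (simp add: Low_def)
        have "u \<noteq> i"
        proof
          assume "u = i"
          then have "(i,v) \<in> EA\<^sup>+" using uvE by simp
          then show False using cover vj by blast
        qed
        moreover have "(u,j) \<in> EA\<^sup>+" by (rule trancl_into_trancl2[OF uvE vj])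
        ultimately have "u \<in> Low" by (simp add: Low_def)
        moreover have "h u < h v" by (rule hmono[OF r_into_trancl[OF uvE]])
        ultimately show ?thesis using True by (simp add: \<rho>_def)
      next
        case vL: False
        show ?thesis
        proof (cases "v = j")
          case True
          have "u \<noteq> i" using False G True u by auto
          then have "u \<in> Low" using uvE True by (auto simp: Low_def)
          then have "\<rho> u \<le> n" using hL by (simp add: \<rho>_def)
          then show ?thesis using True \<rho>j by simp
        next
          case vj: False
          show ?thesis
          proof (cases "v = i")
            case True
            have "u \<noteq> i" using G True by simp
            have "u \<noteq> j"
            proof
              assume "u = j"
              then have "(j,i) \<in> EA" using uvE True by simp
              then have "(j,j) \<in> EA\<^sup>+" using ijE by (meson r_into_trancl trancl_into_trancl)
              then show False using jL by simp
            qed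
            have "(u,j) \<in> EA\<^sup>+" using uvE True ijE by (meson r_into_trancl trancl_into_trancl)
            then have "u \<in> Low" using \<open>u \<noteq> i\<close> by (simp add: Low_def)
            then have "\<rho> u \<le> n" using hL by (simp add: \<rho>_def)
            then show ?thesis using True \<rho>i by simp
          next
            case vi: False
            have rv: "\<rho> v = n+3+h v" using vL vj vi by (simp add: \<rho>_def)
            have "h u < h v" by (rule hmono[OF r_into_trancl[OF uvE]])
            moreover have "\<rho> u \<le> n + 2 \<or> \<rho> u = n+3+h u" using hL[of u] by (auto simp: \<rho>_def)
            ultimately show ?thesis using rv by auto
          qed
        qed
      qed
    qed
  qed
  have aA': "acyclic_orientation I A'" by (rule rank_acyc[OF oA' rk])
  have G1': "A' G1 = j" using G1 by (simp add: A'_def)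
  have neq: "A \<noteq> A'" using G1 G1' ij(1) by auto
  have i1: "1 \<le> i" using interval_sub[OF ih G0I] cG0(2) by auto
  have fl: "\<forall>H\<in>I. (A H \<noteq> A' H \<longrightarrow> A H = i \<and> A' H = j) \<and> ({i, j} \<subseteq> H \<longrightarrow> (A H = i \<longleftrightarrow> A' H = j))"
  proof
    fix H assume H: "H \<in> I"
    have "A H \<noteq> A' H \<longrightarrow> A H = i \<and> A' H = j" by (auto simp: A'_def)
    moreover have "{i, j} \<subseteq> H \<longrightarrow> (A H = i) = (A' H = j)"
      using noji[OF H] H by (auto simp: A'_def)
    ultimately show "(A H \<noteq> A' H \<longrightarrow> A H = i \<and> A' H = j) \<and> ({i, j} \<subseteq> H \<longrightarrow> (A H = i \<longleftrightarrow> A' H = j))" by blast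
  qed
  have flip: "increasing_flip I A A'"
    unfolding increasing_flip_def using neq i1 ij(1) fl by blast
  have "(A,A') \<in> flip_rel I" using aA aA' flip by (simp add: flip_rel_def)
  moreover have "\<forall>G\<in>I. A' G \<le> B G" using bcond le by (simp add: A'_def)
  moreover have "\<forall>G\<in>I. A G \<le> A' G" using ij(1) by (simp add: A'_def)
  moreover have "\<exists>G\<in>I. A G < A' G" using G1 G1' ij(1) by auto
  ultimately show ?thesis by blast
qed


lemma flip_le:
  assumes "(R,Q) \<in> flip_rel I" shows "\<forall>H\<in>I. R H \<le> Q H"
proof
  fix H assume H: "H \<in> I"
  from assms obtain i j where ij: "i < j"
    "\<forall>H\<in>I. (R H \<noteq> Q H \<longrightarrow> R H = i \<and> Q H = j)"
    unfolding flip_rel_def increasing_flip_def by blast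
  then show "R H \<le> Q H" using H by (cases "R H = Q H") auto
qed

lemma forward:
  assumes "(A,B) \<in> (flip_rel I)\<^sup>*" shows "\<forall>H\<in>I. A H \<le> B H"
  using assms
proof (induction rule: rtrancl_induct)
  case base then show ?case by simp
next
  case (step y z)
  from flip_le[OF step.hyps(2)] step.IH show ?case by (meson order_trans)
qed

lemma backward:
  assumes ih: "interval_hypergraph n I" and aB: "acyclic_orientation I B"
  shows "acyclic_orientation I A \<Longrightarrow> \<forall>G\<in>I. A G \<le> B G \<Longrightarrow> (A,B) \<in> (flip_rel I)\<^sup>*"
proof (induction "sum B I - sum A I" arbitrary: A rule: less_induct)
  case less
  have fI: "finite I" by (rule finite_I[OF ih])
  show ?case
  proof (cases "\<exists>G\<in>I. A G < B G")
    case True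
    from step_exists[OF ih less.prems(1) aB less.prems(2) True] obtain A' where
      A': "(A,A') \<in> flip_rel I" "\<forall>G\<in>I. A' G \<le> B G" "\<forall>G\<in>I. A G \<le> A' G" "\<exists>G\<in>I. A G < A' G"
      by blast
    have s1: "sum A I < sum A' I" using fI A'(3,4) by (intro sum_strict_mono_ex1) auto
    have s2: "sum A' I \<le> sum B I" using A'(2) by (intro sum_mono) auto
    have aA': "acyclic_orientation I A'" using A'(1) by (simp add: flip_rel_def)
    have "(A',B) \<in> (flip_rel I)\<^sup>*" using less.hyps[of A'] s1 s2 aA' A'(2) by simp
    then show ?thesis using A'(1) by (rule converse_rtrancl_into_rtrancl[rotated])
  next
    case False
    have "A = B"
    proof (rule extensionalityI[of A I B])
      show "A \<in> extensional I" using less.prems(1) by (simp add: acyclic_orientation_def orientation_def)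
      show "B \<in> extensional I" using aB by (simp add: acyclic_orientation_def orientation_def)
      fix x assume "x \<in> I" then show "A x = B x" using False less.prems(2) by (meson le_less)
    qed
    then show ?thesis by simp
  qed
qed

theorem proposition3p13:
  fixes n :: nat and \<I> :: "nat set set" and A B :: "nat set \<Rightarrow> nat"
  assumes "interval_hypergraph n \<I>"
    and "acyclic_orientation \<I> A" and "acyclic_orientation \<I> B"
  shows "P_le \<I> A B \<longleftrightarrow> (\<forall>I\<in>\<I>. A I \<le> B I)"
  unfolding P_le_def
  using forward backward[OF assms(1) assms(3) assms(2)] by blast

end
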